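(* Let $\mathcal{A}^{(+)}$ be the graded unital associative $\mathbb{C}$-algebra generated by $\nabla_0,\nabla_1,\nabla_2,\nabla_3$ in degree $1$ with relations $[\nabla_0,\nabla_k]=[\nabla_\ell,\nabla_m]$ for every cyclic permutation $(k,\ell,m)$ of $(1,2,3)$. Then $\mathcal{A}^{(+)}$ has exponential growth and is not Gorenstein.
   Context: $\mathcal{A}^{(+)}$ is a quadratic algebra $T(E)/(R)$ with $E=\bigoplus_\lambda\mathbb{C}\nabla_\lambda$; its quadratic dual is $\mathcal{A}^{(+)!}=T(E^* )/(R^\perp)$. Its Koszul complex is the complex of free left modules $\mathcal{A}^{(+)}\otimes(\mathcal{A}^{(+)!}_n)^*$ with differential induced by $a\otimes(e_0\otimes\cdots\otimes e_n)\mapsto ae_0\otimes(e_1\otimes\cdots\otimes e_n)$. If this complex has finite length $D$, $\mathcal{A}^{(+)}$ is called Gorenstein if the cochain complex of right modules obtained by applying $\mathrm{Hom}_{\mathcal{A}^{(+)}}(-,\mathcal{A}^{(+)})$ termwise has cohomology $0$ in degrees $<D$ and isomorphic to the trivial right module $\mathbb{C}$ in degree $D$. Exponential growth means $\dim\mathcal{A}^{(+)}_n$ grows exponentially in $n$. *)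

theory Defs
  imports Complex_Main "HOL-Library.Function_Algebras"
begin

text \<open>Noncommutative polynomials over the complex numbers in the four generators
  nabla_0..nabla_3 (letters 0..3), represented by their coefficient function on words.\<close>

type_synonym ncpoly = "nat list \<Rightarrow> complex"

definition ncp :: "ncpoly set" where
  "ncp = {p. finite {w. p w \<noteq> 0} \<and> (\<forall>w. p w \<noteq> 0 \<longrightarrow> set w \<subseteq> {..<4})}"

definition Thom :: "nat \<Rightarrow> ncpoly set" where
  "Thom n = {p \<in> ncp. \<forall>w. p w \<noteq> 0 \<longrightarrow> length w = n}"

definition ncmul :: "ncpoly \<Rightarrow> ncpoly \<Rightarrow> ncpoly" where
  "ncmul p q = (\<lambda>w. \<Sum>i\<le>length w. p (take i w) * q (drop i w))"

definition mono :: "nat list \<Rightarrow> ncpoly" where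
  "mono u = (\<lambda>w. if w = u then 1 else 0)"

definition gen :: "nat \<Rightarrow> ncpoly" where
  "gen k = mono [k]"

definition scal :: "complex \<Rightarrow> ncpoly \<Rightarrow> ncpoly" where
  "scal c p = (\<lambda>w. c * p w)"

definition ncomm :: "ncpoly \<Rightarrow> ncpoly \<Rightarrow> ncpoly" where
  "ncomm a b = ncmul a b - ncmul b a"

definition cspan :: "ncpoly set \<Rightarrow> ncpoly set" where
  "cspan S = {p. \<exists>B c. finite B \<and> B \<subseteq> S \<and> p = (\<Sum>b\<in>B. scal (c b) b)}"

definition rels :: "ncpoly set" where
  "rels = {ncomm (gen 0) (gen k) - ncomm (gen l) (gen m) | k l m.
            (k, l, m) \<in> {(1,2,3), (2,3,1), (3,1,2)}}"

definition idealA :: "ncpoly set" where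
  "idealA = cspan {ncmul (ncmul (mono u) r) (mono v) | u v r.
                    set u \<subseteq> {..<4} \<and> set v \<subseteq> {..<4} \<and> r \<in> rels}"

definition indep_mod :: "ncpoly set \<Rightarrow> ncpoly set \<Rightarrow> bool" where
  "indep_mod S B = (\<forall>c. (\<Sum>b\<in>B. scal (c b) b) \<in> S \<longrightarrow> (\<forall>b\<in>B. c b = 0))"

definition dimA :: "nat \<Rightarrow> nat" where
  "dimA n = Sup {card B | B. finite B \<and> B \<subseteq> Thom n \<and> indep_mod idealA B}"

definition exponential_growth :: bool where
  "exponential_growth = (\<exists>c::real. c > 1 \<and> (\<exists>N. \<forall>n\<ge>N. c ^ n \<le> real (dimA n)))"

definition sandwich :: "nat \<Rightarrow> nat \<Rightarrow> ncpoly set" where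
  "sandwich i j = cspan {ncmul (ncmul (mono u) r) (mono v) | u v r.
      length u = i \<and> length v = j \<and> set u \<subseteq> {..<4} \<and> set v \<subseteq> {..<4} \<and> r \<in> rels}"

text \<open>kW n = (A^!_n)^*, realised as the subspace intersection of the E^i R E^(n-2-i) in E^{\<otimes>n}.\<close>
definition kW :: "nat \<Rightarrow> ncpoly set" where
  "kW n = {p \<in> Thom n. \<forall>i. i + 2 \<le> n \<longrightarrow> p \<in> sandwich i (n - 2 - i)}"

text \<open>Koszul complex A \<otimes> kW n has finite length D.\<close>
definition koszul_length :: "nat \<Rightarrow> bool" where
  "koszul_length D = (kW D \<noteq> {0} \<and> (\<forall>n>D. kW n = {0}))"

text \<open>Hom_A(A \<otimes> kW n, A) = Hom_C(kW n, A); A-valued maps are represented by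
  T(E)-valued C-linear maps on kW n, taken modulo the ideal.\<close>
definition cochain :: "nat \<Rightarrow> (ncpoly \<Rightarrow> ncpoly) set" where
  "cochain n = {f. (\<forall>x\<in>kW n. f x \<in> ncp) \<and>
     (\<forall>x\<in>kW n. \<forall>y\<in>kW n. f (x + y) = f x + f y) \<and>
     (\<forall>c. \<forall>x\<in>kW n. f (scal c x) = scal c (f x))}"

definition equivC :: "nat \<Rightarrow> (ncpoly \<Rightarrow> ncpoly) \<Rightarrow> (ncpoly \<Rightarrow> ncpoly) \<Rightarrow> bool" where
  "equivC n f g = (\<forall>x\<in>kW n. f x - g x \<in> idealA)"

definition contract :: "nat \<Rightarrow> ncpoly \<Rightarrow> ncpoly" where
  "contract i x = (\<lambda>v. x (i # v))"

text \<open>Dual of the Koszul differential: (delta f)(e_0 \<otimes> w) = e_0 f(w).\<close>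
definition kdelta :: "(ncpoly \<Rightarrow> ncpoly) \<Rightarrow> ncpoly \<Rightarrow> ncpoly" where
  "kdelta f = (\<lambda>x. \<Sum>i<4. ncmul (gen i) (f (contract i x)))"

definition cocycle :: "nat \<Rightarrow> (ncpoly \<Rightarrow> ncpoly) \<Rightarrow> bool" where
  "cocycle n f = equivC (Suc n) (kdelta f) (\<lambda>_. 0)"

definition coboundary :: "nat \<Rightarrow> (ncpoly \<Rightarrow> ncpoly) \<Rightarrow> bool" where
  "coboundary n f = (if n = 0 then equivC 0 f (\<lambda>_. 0)
                     else (\<exists>g\<in>cochain (n - 1). equivC n f (kdelta g)))"

text \<open>The n-th cohomology (a right A-module) is isomorphic to the trivial right module C:
  a C-linear surjection from the cocycles onto C, compatible with the right action
  (a acting on C by its constant term), whose kernel is exactly the coboundaries.\<close>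
definition cohom_iso_trivial :: "nat \<Rightarrow> bool" where
  "cohom_iso_trivial n = (\<exists>\<phi> :: (ncpoly \<Rightarrow> ncpoly) \<Rightarrow> complex.
     (\<forall>f\<in>cochain n. \<forall>g\<in>cochain n. cocycle n f \<longrightarrow> cocycle n g \<longrightarrow>
         \<phi> (\<lambda>x. f x + g x) = \<phi> f + \<phi> g) \<and>
     (\<forall>c. \<forall>f\<in>cochain n. cocycle n f \<longrightarrow> \<phi> (\<lambda>x. scal c (f x)) = c * \<phi> f) \<and>
     (\<forall>f\<in>cochain n. \<forall>g\<in>cochain n. cocycle n f \<longrightarrow> cocycle n g \<longrightarrow>
         equivC n f g \<longrightarrow> \<phi> f = \<phi> g) \<and>
     (\<forall>f\<in>cochain n. cocycle n f \<longrightarrow> (\<phi> f = 0 \<longleftrightarrow> coboundary n f)) \<and>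
     (\<exists>f\<in>cochain n. cocycle n f \<and> \<phi> f = 1) \<and>
     (\<forall>f\<in>cochain n. \<forall>a\<in>ncp. cocycle n f \<longrightarrow>
         \<phi> (\<lambda>x. ncmul (f x) a) = \<phi> f * a []))"

definition gorenstein :: bool where
  "gorenstein = (\<exists>D. koszul_length D \<and>
      (\<forall>k<D. \<forall>f\<in>cochain k. cocycle k f \<longrightarrow> coboundary k f) \<and>
      cohom_iso_trivial D)"

end

theory Submission
  imports Defs
begin

lemma sum_app: "(\<Sum>b\<in>B. f b) x = (\<Sum>b\<in>B. f b x)"
  by (induction B rule: infinite_finite_induct) auto

lemma minus_app: "((p::ncpoly) - q) w = p w - q w" by simp

lemma mono_app: "mono u w = (if w = u then 1 else 0)" by (simp add: mono_def)

lemma ncmul_mono_mono: "ncmul (mono a) (mono b) = mono (a @ b)"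
proof
  fix w
  have "ncmul (mono a) (mono b) w = (\<Sum>i\<le>length w. (if w = a @ b \<and> i = length a then 1 else 0))"
    unfolding ncmul_def mono_def
  proof (rule sum.cong[OF refl])
    fix i assume "i \<in> {..length w}"
    then have "i \<le> length w" by simp
    show "(if take i w = a then 1 else 0) * (if drop i w = b then 1 else 0) =
          (if w = a @ b \<and> i = length a then 1 else (0::complex))"
      using \<open>i \<le> length w\<close> by (auto simp: min_def)
  qed
  also have "\<dots> = mono (a @ b) w"
    by (auto simp: mono_def)
  finally show "ncmul (mono a) (mono b) w = mono (a @ b) w" .
qed

lemma ncmul_diff_left: "ncmul (p - q) r = ncmul p r - ncmul q r"
  by (auto simp: ncmul_def fun_eq_iff sum_subtractf left_diff_distrib)
lemma ncmul_diff_right: "ncmul r (p - q) = ncmul r p - ncmul r q"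
  by (auto simp: ncmul_def fun_eq_iff sum_subtractf right_diff_distrib)
lemma ncmul_add_left: "ncmul (p + q) r = ncmul p r + ncmul q r"
  by (auto simp: ncmul_def fun_eq_iff sum.distrib distrib_right)
lemma ncmul_add_right: "ncmul r (p + q) = ncmul r p + ncmul r q"
  by (auto simp: ncmul_def fun_eq_iff sum.distrib distrib_left)
lemma ncmul_zero_right: "ncmul r 0 = 0"
  by (auto simp: ncmul_def fun_eq_iff)

lemma rel_expand:
  "ncomm (gen 0) (gen k) - ncomm (gen l) (gen m) = mono [0,k] - mono [k,0] - mono [l,m] + mono [m,l]"
  by (simp add: ncomm_def gen_def ncmul_mono_mono)

lemma gen_expand:
  assumes "r \<in> rels"
  shows "\<exists>k l m. (k,l,m) \<in> {(1,2,3), (2,3,1), (3,1,2)} \<and>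
     r = mono [0,k] - mono [k,0] - mono [l,m] + mono [m,l] \<and>
     ncmul (ncmul (mono u) r) (mono v) =
       mono (u@[0,k]@v) - mono (u@[k,0]@v) - mono (u@[l,m]@v) + mono (u@[m,l]@v)"
proof -
  obtain k l m where klm: "(k,l,m) \<in> {(1,2,3), (2,3,1), (3,1,2)}"
    and r: "r = ncomm (gen 0) (gen k) - ncomm (gen l) (gen m)"
    using assms unfolding rels_def by blast
  show ?thesis
    apply (rule exI[of _ k], rule exI[of _ l], rule exI[of _ m])
    using klm by (simp add: r rel_expand ncmul_diff_left ncmul_diff_right ncmul_add_left ncmul_add_right ncmul_mono_mono)
qed

lemma scal_app: "scal c p w = c * p w" by (simp add: scal_def)

lemma cspan_zero_at:
  assumes "p \<in> cspan S" "\<And>g. g \<in> S \<Longrightarrow> g w = 0"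
  shows "p w = 0"
proof -
  obtain B c where B: "finite B" "B \<subseteq> S" "p = (\<Sum>b\<in>B. scal (c b) b)"
    using assms(1) unfolding cspan_def by blast
  have "p w = (\<Sum>b\<in>B. c b * b w)" using B by (simp add: sum_app scal_app)
  also have "\<dots> = 0" using B assms(2) by (intro sum.neutral) auto
  finally show ?thesis .
qed

lemma cspan_pair:
  assumes "p \<in> cspan S" "\<And>g. g \<in> S \<Longrightarrow> g w1 + g w2 = 0"
  shows "p w1 + p w2 = 0"
proof -
  obtain B c where B: "finite B" "B \<subseteq> S" "p = (\<Sum>b\<in>B. scal (c b) b)"
    using assms(1) unfolding cspan_def by blast
  have "p w1 + p w2 = (\<Sum>b\<in>B. c b * (b w1 + b w2))"
    using B by (simp add: sum_app scal_app sum.distrib distrib_left)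
  also have "\<dots> = 0" using B assms(2) by (intro sum.neutral) auto
  finally show ?thesis .
qed

lemma zero_cspan: "0 \<in> cspan S"
  unfolding cspan_def by (rule CollectI, rule exI[of _ "{}"]) auto

lemma single_cspan: "x \<in> S \<Longrightarrow> x \<in> cspan S"
  unfolding cspan_def by (rule CollectI, rule exI[of _ "{x}"], rule exI[of _ "\<lambda>_. 1"]) (auto simp: scal_def)

lemma app_eq3:
  assumes "length t = length u" "length y = length x"
  shows "(t @ y @ s = u @ x @ v) = (t = u \<and> y = x \<and> s = v)"
  using assms by (auto simp: append_eq_append_conv)

lemma mono3: "length t = length u \<Longrightarrow>
   mono (u @ x1 # x2 # v) (t @ y1 # y2 # s) = (if t = u \<and> y1 = x1 \<and> y2 = x2 \<and> s = v then 1 else 0)"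
  using app_eq3[of t u "[y1,y2]" "[x1,x2]" s v] by (simp add: mono_app)

lemma mono3z: "length t = length u \<Longrightarrow> \<not> (t = u \<and> s = v) \<Longrightarrow>
   mono (u @ x1 # x2 # v) (t @ y1 # y2 # s) = 0"
  by (auto simp: mono3)

lemma sand_anti:
  assumes "p \<in> sandwich i j" "length t = i" "length s = j"
  shows "p (t@[a,b]@s) + p (t@[b,a]@s) = 0"
  using assms(1) unfolding sandwich_def
proof (rule cspan_pair)
  fix g assume "g \<in> {ncmul (ncmul (mono u) r) (mono v) | u v r.
      length u = i \<and> length v = j \<and> set u \<subseteq> {..<4} \<and> set v \<subseteq> {..<4} \<and> r \<in> rels}"
  then obtain u v r where g: "g = ncmul (ncmul (mono u) r) (mono v)" "length u = i" "length v = j" "r \<in> rels"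
    by blast
  obtain k l m where klm: "(k,l,m) \<in> {(1,2,3), (2,3,1), (3,1,2)}" and
    e: "g = mono (u@[0,k]@v) - mono (u@[k,0]@v) - mono (u@[l,m]@v) + mono (u@[m,l]@v)"
    using gen_expand[OF g(4), of u v] g(1) by blast
  have L: "length t = length u" using assms(2) g(2) by simp
  show "g (t@[a,b]@s) + g (t@[b,a]@s) = 0"
  proof (cases "t = u \<and> s = v")
    case False then show ?thesis by (simp only: e mono3z[OF L False] append.simps diff_self add_0_right diff_0 minus_zero minus_app plus_fun_apply)
  next
    case True
    then show ?thesis by (simp add: e mono3 conj_commute)
  qed
qed

lemma sand_0123:
  assumes "p \<in> sandwich i j" "length t = i" "length s = j"
  shows "p (t@[0,1]@s) + p (t@[2,3]@s) = 0"
  using assms(1) unfolding sandwich_def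
proof (rule cspan_pair)
  fix g assume "g \<in> {ncmul (ncmul (mono u) r) (mono v) | u v r.
      length u = i \<and> length v = j \<and> set u \<subseteq> {..<4} \<and> set v \<subseteq> {..<4} \<and> r \<in> rels}"
  then obtain u v r where g: "g = ncmul (ncmul (mono u) r) (mono v)" "length u = i" "length v = j" "r \<in> rels"
    by blast
  obtain k l m where klm: "(k,l,m) \<in> {(1,2,3), (2,3,1), (3,1,2)}" and
    e: "g = mono (u@[0,k]@v) - mono (u@[k,0]@v) - mono (u@[l,m]@v) + mono (u@[m,l]@v)"
    using gen_expand[OF g(4), of u v] g(1) by blast
  have L: "length t = length u" using assms(2) g(2) by simp
  show "g (t@[0,1]@s) + g (t@[2,3]@s) = 0"
  proof (cases "t = u \<and> s = v")
    case False then show ?thesis by (simp only: e mono3z[OF L False] append.simps diff_self add_0_right diff_0 minus_zero minus_app plus_fun_apply)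
  next
    case True
    then show ?thesis using klm by (elim insertE emptyE) (simp_all add: e mono3)
  qed
qed

lemma alt3:
  fixes q :: "nat \<Rightarrow> nat \<Rightarrow> nat \<Rightarrow> complex"
  assumes h1: "\<And>a b c. q a b c + q b a c = 0"
    and h2: "\<And>a b c. q a b c + q a c b = 0"
    and h3: "\<And>c. q 0 1 c + q 2 3 c = 0"
    and x: "x < 4" and y: "y < 4" and z: "z < 4"
  shows "q x y z = 0"
proof -
  have s1: "q a b c = - q b a c" if "b < a" for a b c using h1[of a b c] by (simp add: eq_neg_iff_add_eq_0)
  have s2: "q a b c = - q a c b" if "c < b" for a b c using h2[of a b c] by (simp add: eq_neg_iff_add_eq_0)
  have d1: "q a a c = 0" for a c using h1[of a a c] by simp
  have d2: "q a b b = 0" for a b using h2[of a b b] by simp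
  have d3: "q a b a = 0" for a b using h2[of a b a] d1[of a b] by simp
  have z1: "q 0 1 2 = 0" using h3[of 2] d3[of 2 3] by simp
  have z2: "q 0 1 3 = 0" using h3[of 3] d2[of 2 3] by simp
  have z3: "q 0 2 3 = 0"
  proof -
    have "q 2 3 0 = 0" using h3[of 0] d3[of 0 1] by simp
    moreover have "q 2 3 0 = q 0 2 3" using s2[of 0 3 2] s1[of 0 2 3] by simp
    ultimately show ?thesis by simp
  qed
  have z4: "q 1 2 3 = 0"
  proof -
    have "q 2 3 1 = 0" using h3[of 1] d2[of 0 1] by simp
    moreover have "q 2 3 1 = q 1 2 3" using s2[of 1 3 2] s1[of 1 2 3] by simp
    ultimately show ?thesis by simp
  qed
  have xs: "x = 0 \<or> x = 1 \<or> x = 2 \<or> x = 3" using x by auto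
  have ys: "y = 0 \<or> y = 1 \<or> y = 2 \<or> y = 3" using y by auto
  have zs: "z = 0 \<or> z = 1 \<or> z = 2 \<or> z = 3" using z by auto
  show ?thesis
    using xs ys zs
    by (elim disjE) (simp_all add: s1 s2 d1 d2 d3 z1[simplified] z2[simplified] z3 z4[simplified])
qed

lemma kW_zero:
  assumes n: "n \<ge> 3" and p: "p \<in> kW n"
  shows "p = 0"
proof
  fix w
  have T: "p \<in> Thom n" and K: "\<forall>i. i + 2 \<le> n \<longrightarrow> p \<in> sandwich i (n - 2 - i)"
    using p unfolding kW_def by auto
  have S0: "p \<in> sandwich 0 (n - 2)" using K[rule_format, of 0] n by simp
  have S1: "p \<in> sandwich 1 (n - 3)" using K[rule_format, of 1] n by (simp add: numeral_3_eq_3)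
  show "p w = 0 w"
  proof (rule ccontr)
    assume ne: "p w \<noteq> 0 w"
    then have lw: "length w = n" and sw: "set w \<subseteq> {..<4}" using T unfolding Thom_def ncp_def by auto
    then obtain x y z s where w: "w = x # y # z # s"
      using n by (cases w rule: remdups_adj.cases; auto) (metis Suc_le_length_iff numeral_3_eq_3)
    then have ls: "length s = n - 3" using lw by simp
    define q where "q a b c = p (a # b # c # s)" for a b c
    have h1: "q a b c + q b a c = 0" for a b c
      using sand_anti[OF S0, of "[]" "c # s" a b] ls n unfolding q_def by simp
    have h3: "q 0 1 c + q 2 3 c = 0" for c
      using sand_0123[OF S0, of "[]" "c # s"] ls n unfolding q_def by simp
    have h2: "q a b c + q a c b = 0" for a b c
      using sand_anti[OF S1, of "[a]" s b c] ls n unfolding q_def by simp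
    have "q x y z = 0" using alt3[OF h1 h2 h3] sw w by simp
    then show False using ne w unfolding q_def by simp
  qed
qed

definition chi1 :: "nat \<Rightarrow> complex" where
  "chi1 x = (if x = 2 then \<i> else if x = 3 then - \<i> else 1)"
definition chi :: "nat list \<Rightarrow> complex" where
  "chi w = prod_list (map chi1 w)"
definition pim :: "nat list \<Rightarrow> nat list" where
  "pim w = map (\<lambda>x. x mod 2) w"
definition Pre :: "nat list \<Rightarrow> nat list set" where
  "Pre w = {s. set s \<subseteq> {..<4} \<and> length s = length w \<and> pim s = w}"
definition Phi :: "ncpoly \<Rightarrow> ncpoly" where
  "Phi p = (\<lambda>w. \<Sum>s\<in>Pre w. chi s * p s)"

lemma finite_Pre: "finite (Pre w)"
  by (rule finite_subset[OF _ finite_lists_length_eq[of "{..<4::nat}" "length w"]]) (auto simp: Pre_def)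

lemma Phi_add: "Phi (p + q) = Phi p + Phi q"
  by (auto simp: Phi_def fun_eq_iff sum.distrib distrib_left)
lemma Phi_diff: "Phi (p - q) = Phi p - Phi q"
  by (auto simp: Phi_def fun_eq_iff sum_subtractf right_diff_distrib)
lemma Phi_scal: "Phi (scal c p) = scal c (Phi p)"
  by (auto simp: Phi_def fun_eq_iff scal_def sum_distrib_left mult.left_commute)
lemma Phi_zero: "Phi 0 = 0"
  by (auto simp: Phi_def fun_eq_iff)

lemma Phi_sum: "finite B \<Longrightarrow> Phi (\<Sum>b\<in>B. scal (c b) b) = (\<Sum>b\<in>B. scal (c b) (Phi b))"
  proof (induction B rule: finite_induct)
  case empty show ?case by (simp only: sum.empty Phi_zero)
next
  case (insert x F)
  have "Phi (\<Sum>b\<in>insert x F. scal (c b) b) = Phi (scal (c x) x + (\<Sum>b\<in>F. scal (c b) b))"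
    by (rule arg_cong[where f=Phi], rule sum.insert[OF insert(1,2)])
  also have "\<dots> = scal (c x) (Phi x) + (\<Sum>b\<in>F. scal (c b) (Phi b))"
    by (simp only: Phi_add Phi_scal insert(3))
  also have "\<dots> = (\<Sum>b\<in>insert x F. scal (c b) (Phi b))"
    by (rule sum.insert[OF insert(1,2), symmetric])
  finally show ?case .
qed

lemma Phi_mono:
  assumes "set s \<subseteq> {..<4}"
  shows "Phi (mono s) = scal (chi s) (mono (pim s))"
proof
  fix w
  have "Phi (mono s) w = (\<Sum>x\<in>Pre w. if x = s then chi s else 0)"
    unfolding Phi_def mono_def by (intro sum.cong) auto
  also have "\<dots> = (if s \<in> Pre w then chi s else 0)"
    using finite_Pre by (simp add: sum.delta')
  also have "\<dots> = scal (chi s) (mono (pim s)) w"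
    using assms by (auto simp: Pre_def scal_def mono_def pim_def)
  finally show "Phi (mono s) w = scal (chi s) (mono (pim s)) w" .
qed

lemma chi_app: "chi (u @ x # y # v) = chi u * (chi1 x * chi1 y) * chi v"
  by (simp add: chi_def)
lemma pim_app: "pim (u @ x # y # v) = pim u @ (x mod 2) # (y mod 2) # pim v"
  by (simp add: pim_def)

lemma Phi_gen:
  assumes "set u \<subseteq> {..<4}" "set v \<subseteq> {..<4}" "r \<in> rels"
  shows "Phi (ncmul (ncmul (mono u) r) (mono v)) = 0"
proof -
  obtain k l m where klm: "(k,l,m) \<in> {(1,2,3), (2,3,1), (3,1,2)}" and
    e: "ncmul (ncmul (mono u) r) (mono v) =
       mono (u@[0,k]@v) - mono (u@[k,0]@v) - mono (u@[l,m]@v) + mono (u@[m,l]@v)"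
    using gen_expand[OF assms(3), of u v] by blast
  have lt: "set (u @ [a,b] @ v) \<subseteq> {..<4}" if "a < 4" "b < 4" for a b
    using assms that by auto
  have "Phi (ncmul (ncmul (mono u) r) (mono v)) =
     scal (chi (u@[0,k]@v)) (mono (pim (u@[0,k]@v))) - scal (chi (u@[k,0]@v)) (mono (pim (u@[k,0]@v)))
     - scal (chi (u@[l,m]@v)) (mono (pim (u@[l,m]@v))) + scal (chi (u@[m,l]@v)) (mono (pim (u@[m,l]@v)))"
    using klm assms(1,2) unfolding e Phi_add Phi_diff by (auto simp: Phi_mono)
  also have "\<dots> = 0"
    using klm by (auto simp: chi_app pim_app chi1_def scal_def fun_eq_iff)
  finally show ?thesis .
qed

lemma Phi_ideal: "p \<in> idealA \<Longrightarrow> Phi p = 0"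
proof -
  assume "p \<in> idealA"
  then obtain B c where B: "finite B" "B \<subseteq> {ncmul (ncmul (mono u) r) (mono v) | u v r.
                    set u \<subseteq> {..<4} \<and> set v \<subseteq> {..<4} \<and> r \<in> rels}" "p = (\<Sum>b\<in>B. scal (c b) b)"
    unfolding idealA_def cspan_def by blast
  have "Phi p = (\<Sum>b\<in>B. scal (c b) (Phi b))" using B by (simp add: Phi_sum)
  also have "\<dots> = 0"
  proof (rule sum.neutral, rule ballI)
    fix b assume "b \<in> B"
    then have "Phi b = 0" using B(2) Phi_gen by blast
    then show "scal (c b) (Phi b) = 0" by (simp add: scal_def fun_eq_iff)
  qed
  finally show ?thesis .
qed

lemma Phi_id: "set w \<subseteq> {..<2} \<Longrightarrow> Phi (mono w) = mono w"
proof -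
  assume a: "set w \<subseteq> {..<2}"
  then have "set w \<subseteq> {..<4}" by auto
  moreover have "chi w = 1" using a unfolding chi_def
    by (induction w) (auto simp: chi1_def)
  moreover have "pim w = w" using a unfolding pim_def
    by (induction w) auto
  ultimately show ?thesis by (simp add: Phi_mono scal_def)
qed

lemma mono_inj: "inj mono"
  by (rule injI) (metis mono_app zero_neq_one)

definition W2 :: "nat \<Rightarrow> nat list set" where
  "W2 n = {w. set w \<subseteq> {..<2} \<and> length w = n}"

lemma B0_indep: "indep_mod idealA (mono ` W2 n)"
  unfolding indep_mod_def
proof (intro allI impI ballI)
  fix c b0
  assume I: "(\<Sum>b\<in>mono ` W2 n. scal (c b) b) \<in> idealA" and b0: "b0 \<in> mono ` W2 n"
  have fin: "finite (mono ` W2 n)"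
    unfolding W2_def by (rule finite_imageI, rule finite_lists_length_eq) simp
  have "Phi (\<Sum>b\<in>mono ` W2 n. scal (c b) b) = 0" using Phi_ideal[OF I] .
  moreover have "Phi (\<Sum>b\<in>mono ` W2 n. scal (c b) b) = (\<Sum>b\<in>mono ` W2 n. scal (c b) b)"
    using fin by (simp add: Phi_sum) (intro sum.cong refl, auto simp: Phi_id W2_def)
  ultimately have Z: "(\<Sum>b\<in>mono ` W2 n. scal (c b) b) = 0" by simp
  obtain w0 where w0: "w0 \<in> W2 n" "b0 = mono w0" using b0 by blast
  have "0 = (\<Sum>b\<in>mono ` W2 n. scal (c b) b) w0" using Z by simp
  also have "\<dots> = (\<Sum>b\<in>mono ` W2 n. if b = b0 then c b else 0)"
    unfolding sum_app
  proof (intro sum.cong refl)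
    fix b assume "b \<in> mono ` W2 n"
    then obtain w where "b = mono w" by blast
    then show "scal (c b) b w0 = (if b = b0 then c b else 0)"
      using w0 mono_inj by (auto simp: scal_def mono_app dest: injD)
  qed
  also have "\<dots> = c b0" using fin b0 by (simp add: sum.delta')
  finally show "c b0 = 0" by simp
qed

lemma mono_Thom: "set w \<subseteq> {..<4} \<Longrightarrow> mono w \<in> Thom (length w)"
  unfolding Thom_def ncp_def by (auto simp: mono_app)

lemma Thom_span:
  assumes p: "p \<in> Thom n"
  shows "p = (\<Sum>w\<in>{w. p w \<noteq> 0}. scal (p w) (mono w))"
proof
  fix x
  have fin: "finite {w. p w \<noteq> 0}" using p unfolding Thom_def ncp_def by auto
  have "(\<Sum>w\<in>{w. p w \<noteq> 0}. scal (p w) (mono w)) x = (\<Sum>w\<in>{w. p w \<noteq> 0}. if x = w then p x else 0)"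
    unfolding sum_app by (intro sum.cong refl) (auto simp: scal_def mono_app)
  also have "\<dots> = p x" using fin by (simp add: sum.delta)
  finally show "p x = (\<Sum>w\<in>{w. p w \<noteq> 0}. scal (p w) (mono w)) x" by simp
qed

lemma card_bound:
  assumes fin: "finite B" and sub: "B \<subseteq> Thom n" and ind: "indep_mod idealA B"
  shows "card B \<le> 4 ^ n"
proof -
  interpret vs: vector_space "scal :: complex \<Rightarrow> ncpoly \<Rightarrow> ncpoly"
    by unfold_locales (auto simp: scal_def fun_eq_iff algebra_simps)
  define W4 where "W4 = {w. set w \<subseteq> {..<4::nat} \<and> length w = n}"
  have finW: "finite W4" unfolding W4_def by (rule finite_lists_length_eq) simp
  have cW: "card W4 = 4 ^ n" unfolding W4_def by (subst card_lists_length_eq) simp_all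
  have "\<not> vs.dependent B"
  proof
    assume "vs.dependent B"
    then obtain t u where t: "finite t" "t \<subseteq> B" "(\<Sum>v\<in>t. scal (u v) v) = 0" and v: "\<exists>v\<in>t. u v \<noteq> 0"
      unfolding vs.dependent_explicit by blast
    define c where "c b = (if b \<in> t then u b else 0)" for b
    have "(\<Sum>b\<in>B. scal (c b) b) = (\<Sum>b\<in>t. scal (c b) b)"
      using fin t(2) by (intro sum.mono_neutral_right) (auto simp: c_def scal_def fun_eq_iff)
    also have "\<dots> = (\<Sum>b\<in>t. scal (u b) b)" by (intro sum.cong refl) (simp add: c_def)
    finally have "(\<Sum>b\<in>B. scal (c b) b) \<in> idealA" using t(3) by (simp add: idealA_def zero_cspan)
    then have "\<forall>b\<in>B. c b = 0" using ind unfolding indep_mod_def by blast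
    moreover obtain v0 where "v0 \<in> t" "u v0 \<noteq> 0" using v by blast
    ultimately show False using t(2) unfolding c_def by (metis subsetD)
  qed
  moreover have "B \<subseteq> vs.span (mono ` W4)"
  proof
    fix p assume "p \<in> B"
    then have pT: "p \<in> Thom n" using sub by auto
    have "(\<Sum>w\<in>{w. p w \<noteq> 0}. scal (p w) (mono w)) \<in> vs.span (mono ` W4)"
    proof (rule vs.span_sum)
      fix w assume "w \<in> {w. p w \<noteq> 0}"
      then have "w \<in> W4" using pT unfolding Thom_def ncp_def W4_def by auto
      then show "scal (p w) (mono w) \<in> vs.span (mono ` W4)"
        by (intro vs.span_scale vs.span_base) auto
    qed
    then show "p \<in> vs.span (mono ` W4)" using Thom_span[OF pT] by simp
  qed
  ultimately have "card B \<le> card (mono ` W4)"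
    using vs.independent_span_bound[of "mono ` W4" B] finW by auto
  also have "\<dots> \<le> card W4" using finW by (rule card_image_le)
  finally show ?thesis using cW by simp
qed

lemma dimA_ge: "2 ^ n \<le> dimA n"
proof -
  let ?S = "{card B | B. finite B \<and> B \<subseteq> Thom n \<and> indep_mod idealA B}"
  have fin: "finite (mono ` W2 n)"
    unfolding W2_def by (rule finite_imageI, rule finite_lists_length_eq) simp
  have sub: "mono ` W2 n \<subseteq> Thom n"
    using mono_Thom unfolding W2_def by fastforce
  have c: "card (mono ` W2 n) = 2 ^ n"
    using card_image[OF inj_on_subset[OF mono_inj subset_UNIV, of "W2 n"]]
    unfolding W2_def by (simp add: card_lists_length_eq)
  have mem: "2 ^ n \<in> ?S" using fin sub B0_indep c by (metis (mono_tags, lifting) mem_Collect_eq)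
  have bdd: "bdd_above ?S" by (rule bdd_aboveI[of _ "4 ^ n"]) (auto intro: card_bound)
  show ?thesis unfolding dimA_def by (rule cSup_upper[OF mem bdd])
qed

lemma growth: exponential_growth
  unfolding exponential_growth_def
proof (intro exI conjI allI impI)
  show "(1::real) < 2" by simp
  fix n :: nat
  have "(2::real) ^ n = real (2 ^ n)" by simp
  also have "\<dots> \<le> real (dimA n)" using dimA_ge by (simp only: of_nat_le_iff)
  finally show "(2::real) ^ n \<le> real (dimA n)" .
qed

lemma ncp_bin:
  assumes p: "p \<in> ncp" and q: "q \<in> ncp" and sub: "\<And>w. (r::ncpoly) w \<noteq> 0 \<Longrightarrow> p w \<noteq> 0 \<or> q w \<noteq> 0"
  shows "r \<in> ncp"
proof -
  have S: "{w. r w \<noteq> 0} \<subseteq> {w. p w \<noteq> 0} \<union> {w. q w \<noteq> 0}" using sub by blast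
  have fp: "finite {w. p w \<noteq> 0}" using p unfolding ncp_def by simp
  have fq: "finite {w. q w \<noteq> 0}" using q unfolding ncp_def by simp
  have fin: "finite {w. r w \<noteq> 0}"
    by (rule finite_subset[OF S]) (simp add: fp fq)
  have "set w \<subseteq> {..<4}" if "r w \<noteq> 0" for w
  proof -
    have "p w \<noteq> 0 \<or> q w \<noteq> 0" using sub that .
    then show ?thesis using p q unfolding ncp_def by blast
  qed
  then show ?thesis using fin unfolding ncp_def by blast
qed
lemma ncp_diff: "p \<in> ncp \<Longrightarrow> q \<in> ncp \<Longrightarrow> p - q \<in> ncp"
  by (rule ncp_bin[of p q]) auto
lemma ncp_add: "p \<in> ncp \<Longrightarrow> q \<in> ncp \<Longrightarrow> p + q \<in> ncp"
  by (rule ncp_bin[of p q]) auto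
lemma ncp_scal: "p \<in> ncp \<Longrightarrow> scal c p \<in> ncp"
  by (rule ncp_bin[of p p]) (auto simp: scal_def)
lemma Thom_bin:
  assumes p: "p \<in> Thom n" and q: "q \<in> Thom n" and r: "r \<in> ncp"
    and sub: "\<And>w. (r::ncpoly) w \<noteq> 0 \<Longrightarrow> p w \<noteq> 0 \<or> q w \<noteq> 0"
  shows "r \<in> Thom n"
proof -
  have "length w = n" if "r w \<noteq> 0" for w
  proof -
    have "p w \<noteq> 0 \<or> q w \<noteq> 0" using sub that .
    then show ?thesis using p q unfolding Thom_def by blast
  qed
  then show ?thesis using r unfolding Thom_def by blast
qed
lemma Thom_ncp: "p \<in> Thom n \<Longrightarrow> p \<in> ncp" unfolding Thom_def by simp
lemma Thom_diff: "p \<in> Thom n \<Longrightarrow> q \<in> Thom n \<Longrightarrow> p - q \<in> Thom n"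
  by (rule Thom_bin[of p n q]) (auto intro: ncp_diff Thom_ncp)
lemma Thom_add: "p \<in> Thom n \<Longrightarrow> q \<in> Thom n \<Longrightarrow> p + q \<in> Thom n"
  by (rule Thom_bin[of p n q]) (auto intro: ncp_add Thom_ncp)

lemma zero_Thom: "0 \<in> Thom n" unfolding Thom_def ncp_def by simp
lemma zero_kW: "0 \<in> kW n" unfolding kW_def sandwich_def by (simp add: zero_Thom zero_cspan)

lemma kW_big: "n \<ge> 3 \<Longrightarrow> kW n = {0}"
  using kW_zero zero_kW by blast

definition r1 :: ncpoly where "r1 = ncomm (gen 0) (gen 1) - ncomm (gen 2) (gen 3)"
definition r2 :: ncpoly where "r2 = ncomm (gen 0) (gen 2) - ncomm (gen 3) (gen 1)"

lemma r1_rels: "r1 \<in> rels" unfolding rels_def r1_def by blast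
lemma r2_rels: "r2 \<in> rels" unfolding rels_def r2_def by blast
lemma r1_exp: "r1 = mono [0,1] - mono [1,0] - mono [2,3] + mono [3,2]"
  unfolding r1_def rel_expand ..
lemma r2_exp: "r2 = mono [0,2] - mono [2,0] - mono [3,1] + mono [1,3]"
  unfolding r2_def rel_expand ..

lemma rels_kW2:
  assumes "r \<in> rels" shows "r \<in> kW 2"
proof -
  obtain k l m where klm: "(k,l,m) \<in> {(1,2,3), (2,3,1), (3,1,2)}" and
    r: "r = mono [0,k] - mono [k,0] - mono [l,m] + mono [m,l]" and
    e: "ncmul (ncmul (mono []) r) (mono []) =
       mono ([]@[0,k]@[]) - mono ([]@[k,0]@[]) - mono ([]@[l,m]@[]) + mono ([]@[m,l]@[])"
    using gen_expand[OF assms, of "[]" "[]"] by blast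
  have g: "ncmul (ncmul (mono []) r) (mono []) = r" using e r by simp
  have "r \<in> sandwich 0 0" unfolding sandwich_def
    by (rule single_cspan) (use assms g in force)
  moreover have "r \<in> Thom 2"
  proof -
    have "mono [a,b] \<in> Thom 2" if "a < 4" "b < 4" for a b
      using mono_Thom[of "[a,b]"] that by (simp add: numeral_2_eq_2)
    then show ?thesis using klm unfolding r
      by (auto intro!: Thom_add Thom_diff)
  qed
  ultimately show ?thesis unfolding kW_def by auto
qed

lemma r1_val: "r1 [0,1] = 1" "r1 [0,2] = 0"
  by (simp_all add: r1_exp mono_app)
lemma r2_val: "r2 [0,1] = 0" "r2 [0,2] = 1"
  by (simp_all add: r2_exp mono_app)

lemma kW1: "gen 0 \<in> kW 1"
  unfolding kW_def gen_def using mono_Thom[of "[0]"] by simp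

lemma gen0_nz: "gen 0 \<noteq> 0"
proof
  assume "gen 0 = 0"
  then have "gen 0 [0] = 0" by simp
  then show False by (simp add: gen_def mono_app)
qed

lemma r1_nz: "r1 \<noteq> 0"
  using r1_val(1) by auto

lemma mono_nil_ncp: "mono [] \<in> ncp"
  unfolding ncp_def by (auto simp: mono_app)

lemma coeff_cochain: "(\<lambda>x. scal (x w) (mono [])) \<in> cochain n"
  unfolding cochain_def
proof (intro CollectI conjI ballI allI)
  fix x show "scal (x w) (mono []) \<in> ncp" by (rule ncp_scal[OF mono_nil_ncp])
qed (auto simp: scal_def fun_eq_iff distrib_right)

lemma cochain_scale: assumes f: "f \<in> cochain n" shows "(\<lambda>x. scal c (f x)) \<in> cochain n"
  unfolding cochain_def
proof (intro CollectI conjI ballI allI)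
  fix x assume "x \<in> kW n" then show "scal c (f x) \<in> ncp" using f ncp_scal unfolding cochain_def by blast
qed (use f in \<open>auto simp: cochain_def scal_def fun_eq_iff distrib_left mult.left_commute\<close>)

lemma cochain_add: "f \<in> cochain n \<Longrightarrow> g \<in> cochain n \<Longrightarrow> (\<lambda>x. f x + g x) \<in> cochain n"
  unfolding cochain_def
  by (auto simp: ncp_add scal_def fun_eq_iff distrib_left)

lemma cocycle_all:
  assumes K: "kW (Suc n) = {0}" and f: "f \<in> cochain n"
  shows "cocycle n f"
  unfolding cocycle_def equivC_def
proof
  fix x assume "x \<in> kW (Suc n)"
  then have x: "x = 0" using K by auto
  have c: "contract i 0 = 0" for i by (simp add: contract_def fun_eq_iff)
  have "f (scal 0 0) = scal 0 (f 0)" using f zero_kW unfolding cochain_def by blast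
  moreover have "scal 0 (0::ncpoly) = 0" "scal 0 (f 0) = 0" by (simp_all add: scal_def fun_eq_iff)
  ultimately have f0: "f 0 = 0" by simp
  have "kdelta f x = 0" unfolding x kdelta_def c f0 ncmul_zero_right by simp
  then show "kdelta f x - 0 \<in> idealA" by (simp add: idealA_def zero_cspan)
qed

lemma idealA_nil: "p \<in> idealA \<Longrightarrow> p [] = 0"
  unfolding idealA_def
proof (rule cspan_zero_at)
  fix g assume "g \<in> {ncmul (ncmul (mono u) r) (mono v) | u v r.
                    set u \<subseteq> {..<4} \<and> set v \<subseteq> {..<4} \<and> r \<in> rels}"
  then obtain u v r where g: "g = ncmul (ncmul (mono u) r) (mono v)" "r \<in> rels" by blast
  obtain k l m where
    e: "g = mono (u@[0,k]@v) - mono (u@[k,0]@v) - mono (u@[l,m]@v) + mono (u@[m,l]@v)"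
    using gen_expand[OF g(2), of u v] g(1) by blast
  show "g [] = 0" by (simp add: e mono_app)
qed

lemma kdelta_nil: "kdelta g x [] = 0"
  unfolding kdelta_def sum_app by (simp add: ncmul_def gen_def mono_app)

lemma cob2_nil:
  assumes "coboundary 2 h" "x \<in> kW 2"
  shows "h x [] = 0"
proof -
  obtain g where "\<forall>x\<in>kW 2. h x - kdelta g x \<in> idealA"
    using assms(1) unfolding coboundary_def equivC_def by auto
  then have "(h x - kdelta g x) [] = 0" using assms(2) idealA_nil by blast
  then show ?thesis by (simp add: kdelta_nil)
qed

lemma not_gor: "\<not> gorenstein"
proof
  assume "gorenstein"
  then obtain D where KL: "koszul_length D" and CI: "cohom_iso_trivial D"
    unfolding gorenstein_def by blast
  have ne: "kW D \<noteq> {0}" and hi: "\<And>n. n > D \<Longrightarrow> kW n = {0}" using KL unfolding koszul_length_def by auto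
  consider "D = 0" | "D = 1" | "D = 2" | "D \<ge> 3" by linarith
  then show False
  proof cases
    case 1
    then have "kW 1 = {0}" using hi by simp
    then show False using kW1 gen0_nz by blast
  next
    case 2
    then have "kW 2 = {0}" using hi by simp
    then show False using rels_kW2[OF r1_rels] r1_nz by blast
  next
    case 4
    then show False using ne kW_big by blast
  next
    case 3
    then obtain \<phi> :: "(ncpoly \<Rightarrow> ncpoly) \<Rightarrow> complex" where
      add: "\<forall>f\<in>cochain 2. \<forall>g\<in>cochain 2. cocycle 2 f \<longrightarrow> cocycle 2 g \<longrightarrow>
         \<phi> (\<lambda>x. f x + g x) = \<phi> f + \<phi> g" and
      sc: "\<forall>c. \<forall>f\<in>cochain 2. cocycle 2 f \<longrightarrow> \<phi> (\<lambda>x. scal c (f x)) = c * \<phi> f" and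
      ker: "\<forall>f\<in>cochain 2. cocycle 2 f \<longrightarrow> (\<phi> f = 0 \<longleftrightarrow> coboundary 2 f)"
      using CI unfolding cohom_iso_trivial_def by blast
    have K3: "kW (Suc 2) = {0}" using kW_big by simp
    define f1 where "f1 = (\<lambda>x::ncpoly. scal (x [0,1]) (mono []))"
    define f2 where "f2 = (\<lambda>x::ncpoly. scal (x [0,2]) (mono []))"
    have c1: "f1 \<in> cochain 2" and c2: "f2 \<in> cochain 2" unfolding f1_def f2_def by (rule coeff_cochain)+
    define \<alpha> where "\<alpha> = \<phi> f1"
    define \<beta> where "\<beta> = \<phi> f2"
    define F where "F = (\<lambda>x. scal \<beta> (f1 x))"
    define G where "G = (\<lambda>x. scal (- \<alpha>) (f2 x))"
    have cF: "F \<in> cochain 2" unfolding F_def by (rule cochain_scale[OF c1])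
    have cG: "G \<in> cochain 2" unfolding G_def by (rule cochain_scale[OF c2])
    have pF: "\<phi> F = \<beta> * \<alpha>" unfolding F_def \<alpha>_def using sc c1 cocycle_all[OF K3 c1] by blast
    have pG: "\<phi> G = - \<alpha> * \<beta>" unfolding G_def \<beta>_def using sc c2 cocycle_all[OF K3 c2] by blast
    have "\<phi> (\<lambda>x. F x + G x) = \<phi> F + \<phi> G"
      using add cF cG cocycle_all[OF K3 cF] cocycle_all[OF K3 cG] by blast
    then have "\<phi> (\<lambda>x. F x + G x) = 0" using pF pG by simp
    moreover have cH: "(\<lambda>x. F x + G x) \<in> cochain 2" by (rule cochain_add[OF cF cG])
    ultimately have "coboundary 2 (\<lambda>x. F x + G x)" using ker[rule_format, OF cH cocycle_all[OF K3 cH]] by simp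
    then have "(\<lambda>x. F x + G x) r2 [] = 0" by (rule cob2_nil[OF _ rels_kW2[OF r2_rels]])
    then have "F r2 [] + G r2 [] = 0" by simp
    then have a0: "\<alpha> = 0" by (simp add: F_def G_def f1_def f2_def scal_def r2_val[simplified] mono_app)
    have cc1: "cocycle 2 f1" by (rule cocycle_all[OF K3 c1])
    have "coboundary 2 f1" using ker[rule_format, OF c1 cc1] a0 \<alpha>_def by simp
    then have "f1 r1 [] = 0" by (rule cob2_nil[OF _ rels_kW2[OF r1_rels]])
    then show False by (simp add: f1_def scal_def r1_val[simplified] mono_app)
  qed
qed

theorem mainTheorem8:
  shows "exponential_growth \<and> \<not> gorenstein"
  using growth not_gor by blast

end
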